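(* Consider the attack-free algorithm of the context and let $\widetilde\Lambda^k\in\mathbb R^{J\times D}$ be the matrix whose $i$-th row is $(\lambda_i^k)^\top$. Let $\sigma:=1-\widetilde\kappa\in(0,1)$ and assume the step sizes satisfy, for all $k\ge0$, $$\frac{6(\gamma^k)^2}{u_f^2J^2}\le\frac{(2-\sigma)\sigma^2}{3(3-\sigma)}\qquad\text{and}\qquad1\le\frac{(\gamma^k)^2}{(\gamma^{k+1})^2}\le\frac{2}{1+(1-\sigma^2)}.$$ Then for every $k\ge0$, $$\Big\|\widetilde\Lambda^{k+1}-\tfrac1J\widetilde{\mathbf 1}\widetilde{\mathbf 1}^\top\widetilde\Lambda^{k+1}\Big\|_F^2\le\frac{18(\gamma^{k+1})^2\widetilde\delta^2J}{\sigma^3}.$$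
   Context: Attack-free setting. $J$ agents $\mathcal J=\{1,\dots,J\}$ on an undirected connected graph with neighbor sets $\mathcal N_i$. For each $i$, $f_i:\mathbb R^D\to\mathbb R$ is $u_f$-strongly convex and $L_f$-smooth, $C_i\subset\mathbb R^D$ nonempty compact convex, $s\in\mathbb R^D$. $\widetilde g_i(\lambda)=\frac1J\max_{\theta\in C_i}\{-\lambda^\top\theta-f_i(\theta)\}+\frac1J\lambda^\top s$, with $\nabla\widetilde g_i(\lambda)=\frac1Js-\frac1J\arg\min_{\theta\in C_i}\{\lambda^\top\theta+f_i(\theta)\}$, and $\widetilde\delta^2:=\sup_\lambda\max_{i\in\mathcal J}\|\nabla\widetilde g_i(\lambda)-\frac1J\sum_{j}\nabla\widetilde g_j(\lambda)\|^2<\infty$. $\widetilde E=[\widetilde e_{ij}]\in\mathbb R^{J\times J}$ is doubly stochastic, $\widetilde e_{ij}>0$ iff $(i,j)$ is an edge or $i=j$, and $\widetilde\kappa:=\|\widetilde E-\frac1J\widetilde{\mathbf 1}\widetilde{\mathbf 1}^\top\|^2<1$ (spectral norm, $\widetilde{\mathbf 1}\in\mathbb R^J$ all-ones). Algorithm: common initialization $\lambda_i^0=\lambda^0$; $\theta_i^k=\arg\min_{\theta\in C_i}\{\theta^\top\lambda_i^k+f_i(\theta)\}$, $\lambda_i^{k+1/2}=\lambda_i^k-\gamma^k(\frac1Js-\frac1J\theta_i^k)$, $\lambda_i^{k+1}=\sum_{j\in\mathcal N_i\cup\{i\}}\widetilde e_{ij}\lambda_j^{k+1/2}$. $\|\cdot\|_F$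 is the Frobenius norm. *)

theory Defs
  imports "HOL-Analysis.Analysis"
begin

definition strongly_convex :: "real \<Rightarrow> ('a::real_inner \<Rightarrow> real) \<Rightarrow> bool" where
  "strongly_convex u f \<longleftrightarrow> 0 < u \<and> convex_on UNIV (\<lambda>x. f x - (u / 2) * (norm x)^2)"

definition L_smooth :: "real \<Rightarrow> ('a::real_inner \<Rightarrow> real) \<Rightarrow> bool" where
  "L_smooth L f \<longleftrightarrow> (\<exists>g. (\<forall>x. (f has_derivative (\<lambda>h. g x \<bullet> h)) (at x))
      \<and> (\<forall>x y. norm (g x - g y) \<le> L * norm (x - y)))"

text \<open>argmin over C of theta \<mapsto> lambda^T theta + f theta (unique under the standing assumptions).\<close>
definition argminC :: "('a::real_inner \<Rightarrow> real) \<Rightarrow> 'a set \<Rightarrow> 'a \<Rightarrow> 'a" where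
  "argminC f C lam = (THE th. th \<in> C \<and> (\<forall>ps\<in>C. lam \<bullet> th + f th \<le> lam \<bullet> ps + f ps))"

text \<open>gradient of the local dual function tilde g_i, with J = CARD('j) agents.\<close>
definition grad_g :: "('j::finite \<Rightarrow> 'a::real_inner \<Rightarrow> real) \<Rightarrow> ('j \<Rightarrow> 'a set) \<Rightarrow> 'a \<Rightarrow> 'j \<Rightarrow> 'a \<Rightarrow> 'a" where
  "grad_g f C s i lam = (1 / real CARD('j)) *\<^sub>R s - (1 / real CARD('j)) *\<^sub>R argminC (f i) (C i) lam"

definition delta2 :: "('j::finite \<Rightarrow> 'a::real_inner \<Rightarrow> real) \<Rightarrow> ('j \<Rightarrow> 'a set) \<Rightarrow> 'a \<Rightarrow> real" where
  "delta2 f C s = (SUP lam. Max (range (\<lambda>i. (norm (grad_g f C s i lam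
        - (1 / real CARD('j)) *\<^sub>R (\<Sum>j\<in>UNIV. grad_g f C s j lam)))^2)))"

definition undirected_connected :: "('j::finite \<Rightarrow> 'j set) \<Rightarrow> bool" where
  "undirected_connected N \<longleftrightarrow> (\<forall>i. i \<notin> N i) \<and> (\<forall>i j. j \<in> N i \<longleftrightarrow> i \<in> N j)
     \<and> (\<forall>i j. (i, j) \<in> {(a, b). b \<in> N a}\<^sup>*)"

definition doubly_stochastic :: "real^'j^'j \<Rightarrow> bool" where
  "doubly_stochastic E \<longleftrightarrow> (\<forall>i j. 0 \<le> E$i$j) \<and> (\<forall>i. (\<Sum>j\<in>UNIV. E$i$j) = 1)
     \<and> (\<forall>j. (\<Sum>i\<in>UNIV. E$i$j) = 1)"

definition kappa :: "real^'j^'j \<Rightarrow> real" where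
  "kappa E = (onorm (\<lambda>x. (E - (\<chi> i j. 1 / real CARD('j))) *v x))^2"

text \<open>Squared Frobenius norm of Lambda - (1/J) 1 1^T Lambda, rows lam i.\<close>
definition consensus_err :: "('j::finite \<Rightarrow> 'a::real_normed_vector) \<Rightarrow> real" where
  "consensus_err lam = (\<Sum>i\<in>UNIV. (norm (lam i - (1 / real CARD('j)) *\<^sub>R (\<Sum>j\<in>UNIV. lam j)))^2)"

end

theory Submission
  imports Defs
begin


lemma sc_ineq:
  fixes f :: "'a::real_inner \<Rightarrow> real"
  assumes "strongly_convex u f" "0 \<le> t" "t \<le> 1"
  shows "f ((1 - t) *\<^sub>R x + t *\<^sub>R y) \<le> (1 - t) * f x + t * f y - (u/2) * t * (1 - t) * (norm (x - y))^2"
proof -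
  have u: "0 < u" and cv: "convex_on UNIV (\<lambda>x. f x - (u / 2) * (norm x)^2)"
    using assms(1) by (auto simp: strongly_convex_def)
  have h: "f ((1 - t) *\<^sub>R x + t *\<^sub>R y) - (u/2) * (norm ((1 - t) *\<^sub>R x + t *\<^sub>R y))^2
      \<le> (1 - t) * (f x - (u/2) * (norm x)^2) + t * (f y - (u/2) * (norm y)^2)"
    using convex_onD[OF cv, of t x y] assms by auto
  have n: "(norm ((1 - t) *\<^sub>R x + t *\<^sub>R y))^2 = (1 - t) * (norm x)^2 + t * (norm y)^2 - t * (1 - t) * (norm (x - y))^2"
    unfolding power2_norm_eq_inner
    by (simp add: inner_add_left inner_add_right inner_diff_left inner_diff_right inner_commute algebra_simps power2_eq_square)
  show ?thesis using h unfolding n by (simp add: algebra_simps) argo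
qed

lemma min_growth:
  fixes f :: "'a::real_inner \<Rightarrow> real"
  assumes sc: "strongly_convex u f" and cC: "convex C" and th: "th \<in> C"
    and mn: "\<forall>ps\<in>C. l \<bullet> th + f th \<le> l \<bullet> ps + f ps" and y: "y \<in> C"
  shows "(u/2) * (norm (y - th))^2 \<le> (l \<bullet> y + f y) - (l \<bullet> th + f th)"
proof (rule ccontr)
  define a where "a = (l \<bullet> y + f y) - (l \<bullet> th + f th)"
  define c where "c = (u/2) * (norm (y - th))^2"
  assume "\<not> ?thesis"
  hence ac: "a < c" by (simp add: a_def c_def)
  have key: "(1 - t) * c \<le> a" if t0: "0 < t" and t1: "t < 1" for t
  proof -
    define p where "p = (1 - t) *\<^sub>R th + t *\<^sub>R y"
    have pC: "p \<in> C" using cC th y t0 t1 unfolding p_def by (simp add: convex_alt)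
    have "f p \<le> (1 - t) * f th + t * f y - (u/2) * t * (1 - t) * (norm (th - y))^2"
      unfolding p_def by (rule sc_ineq[OF sc]) (use t0 t1 in auto)
    moreover have "l \<bullet> p = (1 - t) * (l \<bullet> th) + t * (l \<bullet> y)"
      unfolding p_def by (simp add: inner_add_right)
    moreover have "l \<bullet> th + f th \<le> l \<bullet> p + f p" using mn pC by blast
    moreover have "norm (th - y) = norm (y - th)" by (rule norm_minus_commute)
    ultimately have "t * ((1 - t) * c) \<le> t * a"
      unfolding a_def c_def by (simp add: algebra_simps)
    thus ?thesis using t0 by simp
  qed
  have c0: "0 \<le> c" using sc unfolding c_def strongly_convex_def by simp
  have "0 \<le> a" using key[of "1/2"] c0 by simp
  hence cpos: "0 < c" using ac by simp
  define t where "t = (c - a) / (2 * c)"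
  have "0 < t" "t < 1" using ac cpos \<open>0 \<le> a\<close> by (auto simp: t_def field_simps)
  hence "(1 - t) * c \<le> a" by (rule key)
  moreover have "(1 - t) * c = (c + a) / 2" using cpos by (simp add: t_def field_simps)
  ultimately show False using ac by simp
qed

lemma argmin_prop:
  fixes f :: "'a::real_inner \<Rightarrow> real"
  assumes sc: "strongly_convex u f" and sm: "L_smooth L f"
    and ne: "C \<noteq> {}" and cp: "compact C" and cC: "convex C"
  shows "argminC f C l \<in> C \<and> (\<forall>ps\<in>C. l \<bullet> argminC f C l + f (argminC f C l) \<le> l \<bullet> ps + f ps)"
proof -
  from sm obtain g where d: "\<And>x. (f has_derivative (\<lambda>h. g x \<bullet> h)) (at x)"
    unfolding L_smooth_def by blast
  have "continuous_on C f"
    proof (rule continuous_at_imp_continuous_on, intro ballI)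
    fix x show "isCont f x" by (rule has_derivative_continuous[OF d])
  qed
  hence "continuous_on C (\<lambda>x. l \<bullet> x + f x)"
    by (intro continuous_intros)
  then obtain th where th: "th \<in> C" "\<forall>ps\<in>C. l \<bullet> th + f th \<le> l \<bullet> ps + f ps"
    using continuous_attains_inf[OF cp ne] by blast
  have u: "0 < u" using sc by (simp add: strongly_convex_def)
  have uniq: "x = th" if "x \<in> C \<and> (\<forall>ps\<in>C. l \<bullet> x + f x \<le> l \<bullet> ps + f ps)" for x
  proof -
    have "(u/2) * (norm (x - th))^2 \<le> (l \<bullet> x + f x) - (l \<bullet> th + f th)"
      by (rule min_growth[OF sc cC th(1) th(2)]) (use that in auto)
    also have "\<dots> \<le> 0" using that th(1) by (simp add: le_diff_eq)
    finally have "(norm (x - th))^2 \<le> 0" using u by (simp add: mult_le_0_iff)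
    thus ?thesis by simp
  qed
  have "argminC f C l = th"
    unfolding argminC_def
  proof (rule the_equality)
    show "th \<in> C \<and> (\<forall>ps\<in>C. l \<bullet> th + f th \<le> l \<bullet> ps + f ps)" using th by blast
  next
    fix x assume "x \<in> C \<and> (\<forall>ps\<in>C. l \<bullet> x + f x \<le> l \<bullet> ps + f ps)"
    thus "x = th" by (rule uniq)
  qed
  thus ?thesis using th by simp
qed

lemma argmin_lip:
  fixes f :: "'a::real_inner \<Rightarrow> real"
  assumes sc: "strongly_convex u f" and sm: "L_smooth L f"
    and ne: "C \<noteq> {}" and cp: "compact C" and cC: "convex C"
  shows "u * norm (argminC f C l1 - argminC f C l2) \<le> norm (l1 - l2)"
proof -
  define a where "a = argminC f C l1"
  define b where "b = argminC f C l2"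
  have A: "a \<in> C" "\<forall>ps\<in>C. l1 \<bullet> a + f a \<le> l1 \<bullet> ps + f ps"
    using argmin_prop[OF sc sm ne cp cC, of l1] by (auto simp: a_def)
  have B: "b \<in> C" "\<forall>ps\<in>C. l2 \<bullet> b + f b \<le> l2 \<bullet> ps + f ps"
    using argmin_prop[OF sc sm ne cp cC, of l2] by (auto simp: b_def)
  have 1: "(u/2) * (norm (b - a))^2 \<le> (l1 \<bullet> b + f b) - (l1 \<bullet> a + f a)"
    by (rule min_growth[OF sc cC A(1) A(2) B(1)])
  have 2: "(u/2) * (norm (a - b))^2 \<le> (l2 \<bullet> a + f a) - (l2 \<bullet> b + f b)"
    by (rule min_growth[OF sc cC B(1) B(2) A(1)])
  have nab: "norm (b - a) = norm (a - b)" by (rule norm_minus_commute)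
  have "u * (norm (a - b))^2 \<le> (l1 - l2) \<bullet> (b - a)"
    using 1 2 nab by (simp add: inner_diff_left inner_diff_right algebra_simps)
  also have "\<dots> \<le> norm (l1 - l2) * norm (a - b)"
    using Cauchy_Schwarz_ineq2[of "l1 - l2" "b - a"] nab by simp
  finally have "u * norm (a - b) * norm (a - b) \<le> norm (l1 - l2) * norm (a - b)"
    by (simp add: power2_eq_square mult.assoc)
  hence "u * norm (a - b) \<le> norm (l1 - l2)"
    by (cases "norm (a - b) = 0") (simp_all add: mult_le_cancel_right)
  thus ?thesis unfolding a_def b_def by auto
qed



lemma young:
  fixes a b :: "'a::real_inner"
  assumes t: "0 < t"
  shows "(norm (a + b))^2 \<le> (1 + t) * (norm a)^2 + (1 + 1/t) * (norm b)^2"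
proof -
  have "2 * (a \<bullet> b) \<le> 2 * (norm a * norm b)"
    using Cauchy_Schwarz_ineq2[of a b] by simp
  also have "\<dots> \<le> t * (norm a)^2 + (1/t) * (norm b)^2"
  proof -
    have "0 \<le> (t * norm a - norm b)^2 / t" using t by simp
    also have "\<dots> = t * (norm a)^2 + (1/t) * (norm b)^2 - 2 * (norm a * norm b)"
      using t by (simp add: field_simps power2_eq_square)
    finally show ?thesis by simp
  qed
  finally have "2 * (a \<bullet> b) \<le> t * (norm a)^2 + (1/t) * (norm b)^2" .
  moreover have "(norm (a + b))^2 = (norm a)^2 + 2 * (a \<bullet> b) + (norm b)^2"
    by (simp add: power2_norm_eq_inner inner_add_left inner_add_right inner_commute)
  ultimately show ?thesis by (simp add: algebra_simps)
qed

lemma cerr_eq: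
  fixes v :: "'j::finite \<Rightarrow> 'a::real_inner"
  shows "consensus_err v = (\<Sum>i\<in>UNIV. (norm (v i))^2) - real CARD('j) * (norm ((1 / real CARD('j)) *\<^sub>R (\<Sum>j\<in>UNIV. v j)))^2"
proof -
  define m where "m = (1 / real CARD('j)) *\<^sub>R (\<Sum>j\<in>UNIV. v j)"
  have J: "real CARD('j) > 0" by simp
  have sm: "(\<Sum>j\<in>UNIV. v j) = real CARD('j) *\<^sub>R m" using J by (simp add: m_def)
  have "consensus_err v = (\<Sum>i\<in>UNIV. (norm (v i))^2 - 2 * (v i \<bullet> m) + (norm m)^2)"
    unfolding consensus_err_def m_def[symmetric]
    by (rule sum.cong) (simp_all add: power2_norm_eq_inner inner_diff_left inner_diff_right inner_commute)
  also have "\<dots> = (\<Sum>i\<in>UNIV. (norm (v i))^2) - 2 * ((\<Sum>i\<in>UNIV. v i) \<bullet> m) + real CARD('j) * (norm m)^2"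
    by (simp add: sum.distrib sum_subtractf sum_distrib_left inner_sum_left)
  also have "\<dots> = (\<Sum>i\<in>UNIV. (norm (v i))^2) - real CARD('j) * (norm m)^2"
    unfolding sm by (simp add: power2_norm_eq_inner)
  finally show ?thesis by (simp add: m_def)
qed

lemma cerr_le:
  fixes v :: "'j::finite \<Rightarrow> 'a::real_inner"
  shows "consensus_err v \<le> (\<Sum>i\<in>UNIV. (norm (v i))^2)"
  unfolding cerr_eq by simp

lemma scalar_poly:
  fixes s e :: real
  assumes s0: "0 < s" and s1: "s \<le> 1" and e0: "0 \<le> e" and es: "e \<le> s / 5"
  shows "2 * (1 - s) * ((1 + s/4) * (1 + e)^2 * 18 + s^3 + 4 * s^2) \<le> 18 * (2 - s^2)"
proof -
  have "(1 + e)^2 \<le> (1 + s/5)^2" using e0 es by (intro power_mono) auto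
  hence "2 * (1 - s) * ((1 + s/4) * (1 + e)^2 * 18) \<le> 2 * (1 - s) * ((1 + s/4) * (1 + s/5)^2 * 18)"
    using s0 s1 by (intro mult_left_mono) auto
  moreover have "0 \<le> s * (63/5 - 191/25 * s + 267/25 * s^2 + 59/25 * s^3)"
    using s0 s1 by (intro mult_nonneg_nonneg) (auto intro!: add_nonneg_nonneg)
  moreover have "18 * (2 - s^2) - 2 * (1 - s) * ((1 + s/4) * (1 + s/5)^2 * 18 + s^3 + 4 * s^2)
      = s * (63/5 - 191/25 * s + 267/25 * s^2 + 59/25 * s^3)"
    by (simp add: field_simps power2_eq_square power3_eq_cube)
  ultimately show ?thesis by (simp add: algebra_simps)
qed

lemma eta_bound:
  fixes s e :: real
  assumes s0: "0 < s" and s1: "s \<le> 1" and e0: "0 \<le> e"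
    and h: "6 * e^2 \<le> (2 - s) * s^2 / (3 * (3 - s))"
  shows "e \<le> s / 5"
proof -
  have d: "0 < 3 * (3 - s)" using s1 by simp
  have "(2 - s) * s^2 \<le> (2/3) * (3 - s) * s^2"
    by (rule mult_right_mono) (use s0 in auto)
  hence "(2 - s) * s^2 / (3 * (3 - s)) \<le> 2 * s^2 / 9"
    using d by (simp add: divide_le_eq algebra_simps)
  hence "6 * e^2 \<le> 2 * s^2 / 9" using h by linarith
  moreover have "0 \<le> e^2" by simp
  ultimately have "e^2 \<le> s^2 / 25" by linarith
  moreover have "(s/5)^2 = s^2/25" by (simp add: power_divide)
  ultimately have "e^2 \<le> (s/5)^2" by simp
  thus ?thesis by (rule power2_le_imp_le) (use s0 in simp)
qed



lemma norm_vec_sq: "(norm (x :: real^'n))^2 = (\<Sum>i\<in>UNIV. (x$i)^2)"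
  unfolding power2_norm_eq_inner inner_vec_def by (simp add: power2_eq_square)

lemma norm_eucl_sq: "(norm (x :: 'a::euclidean_space))^2 = (\<Sum>b\<in>Basis. (x \<bullet> b)^2)"
  unfolding power2_norm_eq_inner by (subst euclidean_inner) (simp add: power2_eq_square)

lemma mix:
  fixes E :: "real^'j^'j" and Z :: "'j::finite \<Rightarrow> 'a::euclidean_space"
  shows "(\<Sum>i\<in>UNIV. (norm (\<Sum>j\<in>UNIV. (E$i$j - 1 / real CARD('j)) *\<^sub>R Z j))^2)
     \<le> kappa E * (\<Sum>i\<in>UNIV. (norm (Z i))^2)"
proof -
  define M where "M = E - (\<chi> i j. 1 / real CARD('j))"
  define z where "z b = (\<chi> j. Z j \<bullet> b)" for b
  define F where "F = (\<lambda>x. M *v x)"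
  have Mij: "M$i$j = E$i$j - 1 / real CARD('j)" for i j by (simp add: M_def)
  have comp: "(\<Sum>j\<in>UNIV. (E$i$j - 1 / real CARD('j)) *\<^sub>R Z j) \<bullet> b = (M *v z b)$i" for i b
    by (simp add: matrix_vector_mult_def z_def Mij inner_sum_left)
  have "(\<Sum>i\<in>UNIV. (norm (\<Sum>j\<in>UNIV. (E$i$j - 1 / real CARD('j)) *\<^sub>R Z j))^2)
      = (\<Sum>i\<in>UNIV. \<Sum>b\<in>Basis. ((M *v z b)$i)^2)"
    by (subst norm_eucl_sq) (simp add: comp)
  also have "\<dots> = (\<Sum>b\<in>Basis. \<Sum>i\<in>UNIV. ((M *v z b)$i)^2)" by (rule sum.swap)
  also have "\<dots> = (\<Sum>b\<in>Basis. (norm (F (z b)))^2)" by (simp add: norm_vec_sq F_def)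
  also have "\<dots> \<le> (\<Sum>b\<in>Basis. kappa E * (norm (z b))^2)"
  proof (rule sum_mono)
    fix b :: 'a
    have bl: "bounded_linear F" unfolding F_def by simp
    have "norm (F (z b)) \<le> onorm F * norm (z b)" by (rule onorm[OF bl])
    hence "(norm (F (z b)))^2 \<le> (onorm F * norm (z b))^2"
      by (simp add: power_mono)
    moreover have "kappa E = (onorm F)^2" by (simp add: kappa_def F_def M_def)
    ultimately show "(norm (F (z b)))^2 \<le> kappa E * (norm (z b))^2"
      by (simp add: power_mult_distrib)
  qed
  also have "\<dots> = kappa E * (\<Sum>b\<in>Basis. \<Sum>j\<in>UNIV. (Z j \<bullet> b)^2)"
    by (simp add: sum_distrib_left norm_vec_sq z_def)
  also have "\<dots> = kappa E * (\<Sum>i\<in>UNIV. (norm (Z i))^2)"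
    by (subst sum.swap) (simp add: norm_eucl_sq)
  finally show ?thesis .
qed

lemma mix2:
  fixes E :: "real^'j^'j" and Y :: "'j::finite \<Rightarrow> 'a::euclidean_space"
  assumes ds: "doubly_stochastic E"
  shows "consensus_err (\<lambda>i. \<Sum>j\<in>UNIV. E$i$j *\<^sub>R Y j) \<le> kappa E * consensus_err Y"
proof -
  define J where "J = real CARD('j)"
  have J0: "0 < J" by (simp add: J_def)
  define Yb where "Yb = (1 / J) *\<^sub>R (\<Sum>j\<in>UNIV. Y j)"
  define W where "W i = (\<Sum>j\<in>UNIV. E$i$j *\<^sub>R Y j)" for i
  have row: "(\<Sum>j\<in>UNIV. E$i$j) = 1" for i using ds by (simp add: doubly_stochastic_def)
  have col: "(\<Sum>i\<in>UNIV. E$i$j) = 1" for j using ds by (simp add: doubly_stochastic_def)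
  have "(\<Sum>i\<in>UNIV. W i) = (\<Sum>j\<in>UNIV. (\<Sum>i\<in>UNIV. E$i$j) *\<^sub>R Y j)"
    unfolding W_def by (subst sum.swap) (simp add: scaleR_sum_left)
  hence Wb: "(1 / J) *\<^sub>R (\<Sum>i\<in>UNIV. W i) = Yb" by (simp add: col Yb_def)
  have cJ: "(\<Sum>j\<in>(UNIV::'j set). 1 / J) = 1" using J0 by (simp add: J_def)
  have dec: "W i - Yb = (\<Sum>j\<in>UNIV. (E$i$j - 1 / J) *\<^sub>R (Y j - Yb))" for i
  proof -
    have "(\<Sum>j\<in>UNIV. (E$i$j - 1 / J) *\<^sub>R (Y j - Yb))
        = W i - (\<Sum>j\<in>UNIV. E$i$j) *\<^sub>R Yb - (1/J) *\<^sub>R (\<Sum>j\<in>UNIV. Y j) + (\<Sum>j\<in>(UNIV::'j set). 1 / J) *\<^sub>R Yb"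
    proof -
      have e: "(E$i$j - 1 / J) *\<^sub>R (Y j - Yb) = E$i$j *\<^sub>R Y j - E$i$j *\<^sub>R Yb - (1/J) *\<^sub>R Y j + (1/J) *\<^sub>R Yb" for j
        by (simp add: algebra_simps)
      show ?thesis unfolding e W_def
        by (simp only: sum.distrib sum_subtractf scaleR_sum_left[symmetric] scaleR_sum_right[symmetric])
    qed
    also have "\<dots> = W i - Yb" using cJ by (simp add: row Yb_def)
    finally show ?thesis by simp
  qed
  have "consensus_err W = (\<Sum>i\<in>UNIV. (norm (\<Sum>j\<in>UNIV. (E$i$j - 1 / real CARD('j)) *\<^sub>R (Y j - Yb)))^2)"
    unfolding consensus_err_def using Wb dec by (simp add: J_def)
  also have "\<dots> \<le> kappa E * (\<Sum>i\<in>UNIV. (norm (Y i - Yb))^2)" by (rule mix)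
  also have "\<dots> = kappa E * consensus_err Y" by (simp add: consensus_err_def Yb_def J_def)
  finally show ?thesis by (simp add: W_def[abs_def])
qed



definition avg :: "('j::finite \<Rightarrow> 'a::real_vector) \<Rightarrow> 'a" where
  "avg v = (1 / real CARD('j)) *\<^sub>R (\<Sum>j\<in>UNIV. v j)"

lemma cerr_avg: "consensus_err v = (\<Sum>i\<in>UNIV. (norm (v i - avg v))^2)"
  by (simp add: consensus_err_def avg_def)

lemma avg_diff: "avg (\<lambda>j. a j - b j) = avg a - avg b"
  by (simp add: avg_def sum_subtractf scaleR_diff_right)
lemma avg_add: "avg (\<lambda>j. a j + b j) = avg a + avg b"
  by (simp add: avg_def sum.distrib scaleR_add_right)
lemma avg_scale: "avg (\<lambda>j. c *\<^sub>R a j) = c *\<^sub>R avg a"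
  by (simp add: avg_def scaleR_sum_right[symmetric])
lemma avg_const: "avg (\<lambda>j::'j::finite. c) = c"
  by (simp add: avg_def sum_constant_scaleR)

lemma grad_diff:
  fixes f :: "'j::finite \<Rightarrow> 'a::real_inner \<Rightarrow> real"
  shows "grad_g f C s j x - grad_g f C s j y = (1 / real CARD('j)) *\<^sub>R (argminC (f j) (C j) y - argminC (f j) (C j) x)"
  by (simp add: grad_g_def scaleR_diff_right)

lemma step_bound:
  fixes f :: "'j::finite \<Rightarrow> 'a::euclidean_space \<Rightarrow> real"
    and C :: "'j \<Rightarrow> 'a set" and s :: 'a and u L :: real and Lam :: "'j \<Rightarrow> 'a"
  assumes f_sc: "\<And>i. strongly_convex u (f i)"
    and f_sm: "\<And>i. L_smooth L (f i)"
    and C_ne: "\<And>i. C i \<noteq> {}" and C_cpt: "\<And>i. compact (C i)" and C_cvx: "\<And>i. convex (C i)"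
    and dH: "\<And>lam i. (norm (grad_g f C s i lam - (1 / real CARD('j)) *\<^sub>R (\<Sum>j\<in>UNIV. grad_g f C s j lam)))^2 \<le> d"
    and g0: "gm \<noteq> 0" and ep: "0 < ep"
  shows "consensus_err (\<lambda>j. Lam j - gm *\<^sub>R grad_g f C s j (Lam j))
    \<le> (1 + ep) * (1 + \<bar>gm\<bar> / (u * real CARD('j)))^2 * consensus_err Lam + (1 + 1/ep) * gm^2 * (real CARD('j) * d)"
proof -
  define J where "J = real CARD('j)"
  have J0: "0 < J" by (simp add: J_def)
  have u0: "0 < u" using f_sc by (simp add: strongly_convex_def)
  define et where "et = \<bar>gm\<bar> / (u * J)"
  have et0: "0 < et" using g0 u0 J0 by (simp add: et_def)
  define g where "g j x = grad_g f C s j x" for j x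
  define Lb where "Lb = avg Lam"
  define A where "A j = Lam j - Lb" for j
  define P where "P j = g j (Lam j) - g j Lb" for j
  define D where "D j = P j - avg P" for j
  define H where "H j = g j Lb - avg (\<lambda>j. g j Lb)" for j
  define Y where "Y j = Lam j - gm *\<^sub>R g j (Lam j)" for j
  have gsplit: "(\<lambda>j. g j (Lam j)) = (\<lambda>j. P j + g j Lb)" by (simp add: P_def fun_eq_iff)
  have Yb: "avg Y = Lb - gm *\<^sub>R (avg P + avg (\<lambda>j. g j Lb))"
  proof -
    have "avg Y = avg Lam - gm *\<^sub>R avg (\<lambda>j. g j (Lam j))"
      unfolding Y_def by (simp add: avg_diff avg_scale)
    also have "avg (\<lambda>j. g j (Lam j)) = avg P + avg (\<lambda>j. g j Lb)"
      unfolding gsplit by (rule avg_add)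
    finally show ?thesis by (simp add: Lb_def)
  qed
  have Ydec: "Y j - avg Y = (A j - gm *\<^sub>R D j) + (- (gm *\<^sub>R H j))" for j
    unfolding Yb Y_def A_def D_def H_def P_def by (simp add: algebra_simps)
  have Pn: "(norm (P j))^2 \<le> (1 / (u * J))^2 * (norm (A j))^2" for j
  proof -
    have "u * norm (argminC (f j) (C j) Lb - argminC (f j) (C j) (Lam j)) \<le> norm (Lb - Lam j)"
      by (rule argmin_lip[OF f_sc f_sm C_ne C_cpt C_cvx])
    hence "norm (argminC (f j) (C j) Lb - argminC (f j) (C j) (Lam j)) \<le> norm (A j) / u"
      using u0 by (simp add: A_def norm_minus_commute field_simps)
    moreover have "norm (P j) = (1 / J) * norm (argminC (f j) (C j) Lb - argminC (f j) (C j) (Lam j))"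
      unfolding P_def g_def grad_diff J_def[symmetric] using J0 by simp
    ultimately have "norm (P j) \<le> (1 / J) * (norm (A j) / u)"
      using J0 by (metis less_imp_le mult_left_mono zero_le_divide_1_iff)
    hence "norm (P j) \<le> (1 / (u * J)) * norm (A j)" by (simp add: field_simps)
    hence "(norm (P j))^2 \<le> ((1 / (u * J)) * norm (A j))^2" by (simp add: power_mono)
    thus ?thesis by (simp add: power_mult_distrib power_divide)
  qed
  have Dsum: "(\<Sum>j\<in>UNIV. (norm (D j))^2) \<le> (1 / (u * J))^2 * consensus_err Lam"
  proof -
    have "(\<Sum>j\<in>UNIV. (norm (D j))^2) = consensus_err P" by (simp add: cerr_avg D_def)
    also have "\<dots> \<le> (\<Sum>j\<in>UNIV. (norm (P j))^2)" by (rule cerr_le)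
    also have "\<dots> \<le> (\<Sum>j\<in>UNIV. (1 / (u * J))^2 * (norm (A j))^2)" by (rule sum_mono) (rule Pn)
    also have "\<dots> = (1 / (u * J))^2 * consensus_err Lam"
      by (simp add: sum_distrib_left cerr_avg A_def Lb_def)
    finally show ?thesis .
  qed
  have Hsum: "(\<Sum>j\<in>UNIV. (norm (H j))^2) \<le> J * d"
  proof -
    have "(\<Sum>j\<in>UNIV. (norm (H j))^2) \<le> (\<Sum>j\<in>(UNIV::'j set). d)"
      by (rule sum_mono) (simp add: H_def g_def avg_def dH)
    thus ?thesis by (simp add: J_def)
  qed
  have per: "(norm (Y j - avg Y))^2 \<le> (1 + ep) * ((1 + et) * (norm (A j))^2 + (1 + 1/et) * gm^2 * (norm (D j))^2)
      + (1 + 1/ep) * gm^2 * (norm (H j))^2" for j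
  proof -
    have "(norm (Y j - avg Y))^2 \<le> (1 + ep) * (norm (A j - gm *\<^sub>R D j))^2 + (1 + 1/ep) * (norm (- (gm *\<^sub>R H j)))^2"
      unfolding Ydec by (rule young[OF ep])
    also have "(norm (A j - gm *\<^sub>R D j))^2 \<le> (1 + et) * (norm (A j))^2 + (1 + 1/et) * (norm (- (gm *\<^sub>R D j)))^2"
      using young[OF et0, of "A j" "- (gm *\<^sub>R D j)"] by simp
    finally show ?thesis using ep by (simp add: power_mult_distrib mult_left_mono mult.assoc)
  qed
  have "consensus_err Y = (\<Sum>j\<in>UNIV. (norm (Y j - avg Y))^2)" by (rule cerr_avg)
  also have "\<dots> \<le> (\<Sum>j\<in>UNIV. (1 + ep) * ((1 + et) * (norm (A j))^2 + (1 + 1/et) * gm^2 * (norm (D j))^2)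
      + (1 + 1/ep) * gm^2 * (norm (H j))^2)" by (rule sum_mono) (rule per)
  also have "\<dots> = (1 + ep) * ((1 + et) * consensus_err Lam + (1 + 1/et) * gm^2 * (\<Sum>j\<in>UNIV. (norm (D j))^2))
      + (1 + 1/ep) * gm^2 * (\<Sum>j\<in>UNIV. (norm (H j))^2)"
    by (simp add: sum.distrib sum_distrib_left cerr_avg A_def Lb_def distrib_left)
  also have "\<dots> \<le> (1 + ep) * ((1 + et) * consensus_err Lam + (1 + 1/et) * gm^2 * ((1 / (u * J))^2 * consensus_err Lam))
      + (1 + 1/ep) * gm^2 * (J * d)"
    using Dsum Hsum ep et0
    by (intro add_mono mult_left_mono) (auto intro!: mult_nonneg_nonneg)
  also have "\<dots> = (1 + ep) * ((1 + et) * consensus_err Lam + ((1 + 1/et) * gm^2 * (1 / (u * J))^2) * consensus_err Lam)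
      + (1 + 1/ep) * gm^2 * (J * d)" by (simp add: mult.assoc)
  also have "(1 + 1/et) * gm^2 * (1 / (u * J))^2 = et + et^2"
    using et0 u0 J0 by (simp add: et_def field_simps power2_eq_square)
  also have "(1 + ep) * ((1 + et) * consensus_err Lam + (et + et^2) * consensus_err Lam)
      = (1 + ep) * (1 + et)^2 * consensus_err Lam" by (simp add: power2_eq_square algebra_simps)
  finally show ?thesis
    by (simp add: Y_def g_def et_def J_def)
qed



lemma final_alg:
  fixes s e e' eta G G' W :: real
  assumes s0: "0 < s" and s1: "s \<le> 1" and e0: "0 \<le> eta" and es: "eta \<le> s / 5"
    and W0: "0 \<le> W" and G0: "0 \<le> G" and ee: "e \<le> 18 * G * W / s^3"
    and GG: "G * (2 - s^2) \<le> 2 * G'"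
    and e': "e' \<le> (1 - s) * ((1 + s/4) * (1 + eta)^2 * e + (1 + 1 / (s/4)) * G * W)"
  shows "e' \<le> 18 * G' * W / s^3"
proof -
  define X where "X = (1 + s/4) * (1 + eta)^2 * 18 + s^3 + 4 * s^2"
  have p: "2 * (1 - s) * X \<le> 18 * (2 - s^2)" unfolding X_def by (rule scalar_poly[OF s0 s1 e0 es])
  have "e' \<le> (1 - s) * ((1 + s/4) * (1 + eta)^2 * (18 * G * W / s^3) + (1 + 1 / (s/4)) * G * W)"
  proof -
    have c0: "0 \<le> (1 + s/4) * (1 + eta)^2" using s0 by simp
    have h1: "(1 + s/4) * (1 + eta)^2 * e \<le> (1 + s/4) * (1 + eta)^2 * (18 * G * W / s^3)"
      by (rule mult_left_mono[OF ee c0])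
    have "(1 - s) * ((1 + s/4) * (1 + eta)^2 * e + (1 + 1 / (s/4)) * G * W)
       \<le> (1 - s) * ((1 + s/4) * (1 + eta)^2 * (18 * G * W / s^3) + (1 + 1 / (s/4)) * G * W)"
      by (rule mult_left_mono[OF add_right_mono[OF h1]]) (use s1 in auto)
    thus ?thesis using e' by linarith
  qed
  also have "\<dots> = (1 - s) * X * (G * W) / s^3"
    using s0 by (simp add: X_def field_simps power3_eq_cube power2_eq_square)
  also have "\<dots> \<le> (18 * (2 - s^2) / 2) * (G * W) / s^3"
  proof -
    have "(1 - s) * X \<le> 18 * (2 - s^2) / 2" using p by (simp add: algebra_simps)
    hence "(1 - s) * X * (G * W) \<le> (18 * (2 - s^2) / 2) * (G * W)"
      using G0 W0 by (intro mult_right_mono) auto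
    thus ?thesis using s0 by (intro divide_right_mono) auto
  qed
  also have "\<dots> \<le> 18 * G' * W / s^3"
  proof -
    have "9 * (G * (2 - s^2)) * W \<le> 9 * (2 * G') * W" using GG W0 by (intro mult_right_mono) auto
    hence "(18 * (2 - s^2) / 2) * (G * W) \<le> 18 * G' * W" by (simp add: algebra_simps)
    thus ?thesis using s0 by (intro divide_right_mono) auto
  qed
  finally show ?thesis .
qed



theorem lemma8:
  fixes f :: "'j::finite \<Rightarrow> 'a::euclidean_space \<Rightarrow> real"
    and C :: "'j \<Rightarrow> 'a set" and s :: 'a and u L :: real
    and N :: "'j \<Rightarrow> 'j set" and E :: "real^'j^'j"
    and gamma :: "nat \<Rightarrow> real" and lam0 :: 'a
    and lam theta :: "nat \<Rightarrow> 'j \<Rightarrow> 'a"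
  assumes f_sc: "\<And>i. strongly_convex u (f i)"
    and f_sm: "\<And>i. L_smooth L (f i)"
    and C_ne: "\<And>i. C i \<noteq> {}" and C_cpt: "\<And>i. compact (C i)" and C_cvx: "\<And>i. convex (C i)"
    and delta_fin: "bdd_above (range (\<lambda>lam. Max (range (\<lambda>i. (norm (grad_g f C s i lam
        - (1 / real CARD('j)) *\<^sub>R (\<Sum>j\<in>UNIV. grad_g f C s j lam)))^2))))"
    and graph: "undirected_connected N"
    and E_ds: "doubly_stochastic E"
    and E_supp: "\<And>i j. 0 < E$i$j \<longleftrightarrow> (j \<in> N i \<or> i = j)"
    and kappa_lt: "kappa E < 1"
    and init: "\<And>i. lam 0 i = lam0"
    and theta_def: "\<And>k i. theta k i = argminC (f i) (C i) (lam k i)"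
    and lam_step: "\<And>k i. lam (Suc k) i = (\<Sum>j\<in>insert i (N i). E$i$j *\<^sub>R
          (lam k j - gamma k *\<^sub>R ((1 / real CARD('j)) *\<^sub>R s - (1 / real CARD('j)) *\<^sub>R theta k j)))"
    and step1: "\<And>k. 6 * (gamma k)^2 / (u^2 * (real CARD('j))^2)
          \<le> (2 - (1 - kappa E)) * (1 - kappa E)^2 / (3 * (3 - (1 - kappa E)))"
    and step2: "\<And>k. 1 \<le> (gamma k)^2 / (gamma (Suc k))^2"
    and step3: "\<And>k. (gamma k)^2 / (gamma (Suc k))^2 \<le> 2 / (1 + (1 - (1 - kappa E)^2))"
  shows "consensus_err (lam (Suc k)) \<le>
      18 * (gamma (Suc k))^2 * delta2 f C s * real CARD('j) / (1 - kappa E)^3"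
proof -
  define J where "J = real CARD('j)"
  have J0: "0 < J" by (simp add: J_def)
  define sg where "sg = 1 - kappa E"
  have k0: "0 \<le> kappa E" by (simp add: kappa_def)
  have sg0: "0 < sg" and sg1: "sg \<le> 1" using k0 kappa_lt by (auto simp: sg_def)
  have u0: "0 < u" using f_sc by (simp add: strongly_convex_def)
  define d where "d = delta2 f C s"
  have dH: "(norm (grad_g f C s i lam - (1 / real CARD('j)) *\<^sub>R (\<Sum>j\<in>UNIV. grad_g f C s j lam)))^2 \<le> d" for lam i
  proof -
    have "(norm (grad_g f C s i lam - (1 / real CARD('j)) *\<^sub>R (\<Sum>j\<in>UNIV. grad_g f C s j lam)))^2
       \<le> Max (range (\<lambda>i. (norm (grad_g f C s i lam - (1 / real CARD('j)) *\<^sub>R (\<Sum>j\<in>UNIV. grad_g f C s j lam)))^2))"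
      by (rule Max_ge) auto
    also have "\<dots> \<le> d" unfolding d_def delta2_def
      by (rule cSUP_upper[OF UNIV_I delta_fin])
    finally show ?thesis .
  qed
  have d0: "0 \<le> d" using dH[of undefined undefined] by (meson order_trans zero_le_power2)
  have gnz: "gamma n \<noteq> 0" for n
    using step2[of n] by (cases "gamma n = 0") auto
  have lstep: "lam (Suc n) = (\<lambda>i. \<Sum>j\<in>UNIV. E$i$j *\<^sub>R (lam n j - gamma n *\<^sub>R grad_g f C s j (lam n j)))" for n
  proof
    fix i
    have E0: "E$i$j = 0" if "j \<notin> insert i (N i)" for j
      using E_supp[of i j] E_ds that by (auto simp: doubly_stochastic_def order_le_less)
    have "lam (Suc n) i = (\<Sum>j\<in>insert i (N i). E$i$j *\<^sub>R (lam n j - gamma n *\<^sub>R grad_g f C s j (lam n j)))"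
      unfolding lam_step grad_g_def theta_def by simp
    also have "\<dots> = (\<Sum>j\<in>UNIV. E$i$j *\<^sub>R (lam n j - gamma n *\<^sub>R grad_g f C s j (lam n j)))"
      by (rule sum.mono_neutral_left) (auto simp: E0)
    finally show "lam (Suc n) i = (\<Sum>j\<in>UNIV. E$i$j *\<^sub>R (lam n j - gamma n *\<^sub>R grad_g f C s j (lam n j)))" .
  qed
  have rec: "consensus_err (lam (Suc n)) \<le> sg * 0 + (1 - sg) * ((1 + sg/4) * (1 + \<bar>gamma n\<bar> / (u * J))^2 * consensus_err (lam n)
      + (1 + 1 / (sg/4)) * (gamma n)^2 * (J * d))" for n
  proof -
    have "consensus_err (lam (Suc n)) \<le> kappa E * consensus_err (\<lambda>j. lam n j - gamma n *\<^sub>R grad_g f C s j (lam n j))"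
      unfolding lstep by (rule mix2[OF E_ds])
    also have "consensus_err (\<lambda>j. lam n j - gamma n *\<^sub>R grad_g f C s j (lam n j))
      \<le> (1 + sg/4) * (1 + \<bar>gamma n\<bar> / (u * J))^2 * consensus_err (lam n) + (1 + 1/(sg/4)) * (gamma n)^2 * (J * d)"
      unfolding J_def by (rule step_bound[OF f_sc f_sm C_ne C_cpt C_cvx dH gnz]) (use sg0 in simp)
    finally show ?thesis using k0 by (simp add: sg_def mult_left_mono)
  qed
  have main: "consensus_err (lam n) \<le> 18 * (gamma n)^2 * (J * d) / sg^3" for n
  proof (induction n)
    case 0
    have "consensus_err (lam 0) = 0"
      unfolding consensus_err_def init by (simp add: sum_constant_scaleR)
    thus ?case using d0 J0 sg0 by simp
  next
    case (Suc n)
    define eta where "eta = \<bar>gamma n\<bar> / (u * J)"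
    have eta0: "0 \<le> eta" using u0 J0 by (simp add: eta_def)
    have "6 * eta^2 = 6 * (gamma n)^2 / (u^2 * J^2)"
      by (simp add: eta_def power_divide power_mult_distrib)
    hence "6 * eta^2 \<le> (2 - sg) * sg^2 / (3 * (3 - sg))" using step1[of n] by (simp add: sg_def J_def)
    hence es: "eta \<le> sg / 5" by (rule eta_bound[OF sg0 sg1 eta0])
    have g1: "0 < (gamma (Suc n))^2" using gnz by simp
    have "(gamma n)^2 \<le> 2 / (2 - sg^2) * (gamma (Suc n))^2"
      using step3[of n] g1 by (simp add: sg_def divide_le_eq)
    moreover have pos: "0 < 2 - sg^2"
    proof -
      have "sg^2 \<le> 1" using sg0 sg1 by (simp add: power_le_one)
      thus ?thesis by simp
    qed
    ultimately have GG: "(gamma n)^2 * (2 - sg^2) \<le> 2 * (gamma (Suc n))^2"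
      by (simp add: le_divide_eq)
    show ?case
      by (rule final_alg[OF sg0 sg1 eta0 es _ _ Suc.IH GG]) (use rec[of n] J0 d0 in \<open>simp_all add: eta_def\<close>)
  qed
  show ?thesis using main[of "Suc k"] by (simp add: J_def d_def sg_def mult.commute mult.left_commute)
qed

end
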